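(* Under (LS) with $k=0$ and (F1), there is $C_{Cov}<\infty$ such that for every $h\in\mathbb{Z}$, $$\sup_{\underline s_1,\underline s_2\in\mathcal S,\ u_1,u_2\in[0,1]}\Big|\operatorname{Cov}\big(f(\underline s_1,\widetilde{\underline X}_0(u_1)),f(\underline s_2,\widetilde{\underline X}_h(u_2))\big)\Big|\le C_{Cov}\,\vartheta^{|h|\delta/(2(1+\delta))}.$$
   Context: (LS) with $k=0$: $\underline X_{t,T}=\underline\mu(t/T)+\sum_jA_{t,T}(j)\underline\varepsilon_{t-j}$; $(\underline\varepsilon_t)$ i.i.d. centred in $\mathbb{R}^d$ with $E|\underline\varepsilon_1|_1<\infty$; $\underline\mu$ continuously differentiable; for some $\vartheta\in(0,1)$, $B<\infty$: $\sup_{t,T}|A_{t,T}(j)|_1\le B\vartheta^{|j|}$ ($|M|_1=\max_j\sum_i|m^{(i,j)}|$); entrywise continuously differentiable $A(\cdot,j)=(a^{(p,q)}(\cdot,j))$ with $\sup_u|a^{(p,q)}(u,j)|\le B\vartheta^{|j|}$ and $\sup_{t,T}T|A_{t,T}(j)-A(t/T,j)|_1\le B\vartheta^{|j|}$. $\widetilde{\underline X}_t(u)=\underline\mu(u)+\sum_jA(u,j)\underline\varepsilon_{t-j}$; truncations $\widetilde{\underline X}^{(M)}_t(u)$, $\underline X^{(M)}_{t,T}$: sums restricted to $|j|<M$. (F1): $(\mathcal S,\rho)$ compact semimetric, $\mathcal S\subseteq\overline{\mathbb{R}}^d$; $\sup_{\underline s}|f(\underline s,\underline x)-f(\underline s,\underline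 x^\circ)|\le C_{Lip}|\underline x-\underline x^\circ|_1$; for some $\delta\in(0,1/2)$ (the $\delta$ in the claim), uniformly bounded $(2+\delta)$-th absolute moments of $f(\underline s,\underline X_{t,T}),f(\underline s,\underline X^{(M)}_{t,T})$ (over $t\le T,\underline s,M$) and of $f(\underline s,\widetilde{\underline X}_0(u)),f(\underline s,\widetilde{\underline X}^{(M)}_0(u))$ (over $u,\underline s,M$). *)

theory Defs
  imports "HOL-Probability.Probability"
begin

definition vnorm1 :: "real ^ 'd \<Rightarrow> real" where
  "vnorm1 x = (\<Sum>i\<in>UNIV. \<bar>x $ i\<bar>)"

text \<open>The matrix norm |M|_1 = max over columns j of sum over rows i of |m(i,j)|.
  A matrix is real^'d^'d, with m $ i $ j the entry in row i, column j.\<close>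
definition mnorm1 :: "real ^ 'd ^ 'd \<Rightarrow> real" where
  "mnorm1 m = Max (range (\<lambda>j. \<Sum>i\<in>UNIV. \<bar>m $ i $ j\<bar>))"

definition cov :: "'a measure \<Rightarrow> ('a \<Rightarrow> real) \<Rightarrow> ('a \<Rightarrow> real) \<Rightarrow> real" where
  "cov M Y Z = (\<integral>w. Y w * Z w \<partial>M) - (\<integral>w. Y w \<partial>M) * (\<integral>w. Z w \<partial>M)"

definition compact_semimetric :: "'s set \<Rightarrow> ('s \<Rightarrow> 's \<Rightarrow> real) \<Rightarrow> bool" where
  "compact_semimetric S \<rho> \<longleftrightarrow>
     (\<forall>x\<in>S. \<forall>y\<in>S. \<rho> x y \<ge> 0 \<and> \<rho> x y = \<rho> y x) \<and> (\<forall>x\<in>S. \<rho> x x = 0) \<and>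
     (\<forall>s. (\<forall>n. s n \<in> S) \<longrightarrow>
        (\<exists>(r::nat \<Rightarrow> nat) x. strict_mono r \<and> x \<in> S \<and> (\<lambda>n. \<rho> (s (r n)) x) \<longlonglongrightarrow> 0))"

definition Xtil :: "(real \<Rightarrow> real ^ 'd) \<Rightarrow> (real \<Rightarrow> int \<Rightarrow> real ^ 'd ^ 'd) \<Rightarrow>
    (int \<Rightarrow> 'a \<Rightarrow> real ^ 'd) \<Rightarrow> int \<Rightarrow> real \<Rightarrow> 'a \<Rightarrow> real ^ 'd" where
  "Xtil \<mu> A eps t u w = \<mu> u + (\<Sum>\<^sub>\<infinity>j::int. A u j *v eps (t - j) w)"

definition XtilM :: "(real \<Rightarrow> real ^ 'd) \<Rightarrow> (real \<Rightarrow> int \<Rightarrow> real ^ 'd ^ 'd) \<Rightarrow>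
    (int \<Rightarrow> 'a \<Rightarrow> real ^ 'd) \<Rightarrow> nat \<Rightarrow> int \<Rightarrow> real \<Rightarrow> 'a \<Rightarrow> real ^ 'd" where
  "XtilM \<mu> A eps M t u w = \<mu> u + (\<Sum>j\<in>{j::int. \<bar>j\<bar> < int M}. A u j *v eps (t - j) w)"

definition XLS :: "(real \<Rightarrow> real ^ 'd) \<Rightarrow> (int \<Rightarrow> nat \<Rightarrow> int \<Rightarrow> real ^ 'd ^ 'd) \<Rightarrow>
    (int \<Rightarrow> 'a \<Rightarrow> real ^ 'd) \<Rightarrow> int \<Rightarrow> nat \<Rightarrow> 'a \<Rightarrow> real ^ 'd" where
  "XLS \<mu> At eps t T w = \<mu> (real_of_int t / real T) + (\<Sum>\<^sub>\<infinity>j::int. At t T j *v eps (t - j) w)"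

definition XLSM :: "(real \<Rightarrow> real ^ 'd) \<Rightarrow> (int \<Rightarrow> nat \<Rightarrow> int \<Rightarrow> real ^ 'd ^ 'd) \<Rightarrow>
    (int \<Rightarrow> 'a \<Rightarrow> real ^ 'd) \<Rightarrow> nat \<Rightarrow> int \<Rightarrow> nat \<Rightarrow> 'a \<Rightarrow> real ^ 'd" where
  "XLSM \<mu> At eps M t T w = \<mu> (real_of_int t / real T)
      + (\<Sum>j\<in>{j::int. \<bar>j\<bar> < int M}. At t T j *v eps (t - j) w)"

end

theory Submission
  imports Defs
begin

definition IS :: "nat \<Rightarrow> int set" where "IS n = {j::int. \<bar>j\<bar> < int n}"

lemma IS_finite[simp]: "finite (IS n)"
proof -
  have "IS n \<subseteq> {- int n..int n}" by (auto simp: IS_def)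
  then show ?thesis by (rule finite_subset) simp
qed

lemma IS_mono: "n \<le> n' \<Longrightarrow> IS n \<subseteq> IS n'"
  by (auto simp: IS_def)

lemma IS_cover:
  assumes "finite F" shows "\<exists>n. F \<subseteq> IS n"
proof -
  define n where "n = Suc (nat (\<Sum>j\<in>F. \<bar>j\<bar>))"
  have "F \<subseteq> IS n"
  proof
    fix j assume j: "j \<in> F"
    have "\<bar>j\<bar> \<le> (\<Sum>j\<in>F. \<bar>j\<bar>)"
      using assms j by (intro member_le_sum) auto
    then show "j \<in> IS n" by (auto simp: IS_def n_def)
  qed
  then show ?thesis by blast
qed

lemma IS_filterlim: "filterlim IS (finite_subsets_at_top UNIV) sequentially"
  unfolding filterlim_finite_subsets_at_top
proof (intro allI impI)
  fix X :: "int set" assume "finite X \<and> X \<subseteq> UNIV"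
  then obtain n where n: "X \<subseteq> IS n" using IS_cover by blast
  show "\<forall>\<^sub>F y in sequentially. finite (IS y) \<and> X \<subseteq> IS y \<and> IS y \<subseteq> UNIV"
    unfolding eventually_sequentially
  proof (intro exI[of _ n] allI impI conjI)
    fix k :: nat assume "n \<le> k"
    then have "IS n \<subseteq> IS k" by (rule IS_mono)
    then show "X \<subseteq> IS k" using n by auto
  qed auto
qed

lemma infsum_IS_tendsto:
  assumes "a summable_on UNIV"
  shows "(\<lambda>n. \<Sum>j\<in>IS n. a j) \<longlonglongrightarrow> infsum a UNIV"
  by (rule filterlim_compose[OF infsum_tendsto[OF assms] IS_filterlim])

lemma vnorm1_nonneg[simp]: "0 \<le> vnorm1 x"
  by (simp add: vnorm1_def sum_nonneg)

lemma norm_le_vnorm1: "norm x \<le> vnorm1 x"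
  unfolding vnorm1_def by (rule norm_le_l1_cart)

lemma vnorm1_le_norm: "vnorm1 (x::real^'d) \<le> real CARD('d) * norm x"
proof -
  have "vnorm1 x \<le> (\<Sum>i\<in>(UNIV::'d set). norm x)"
    unfolding vnorm1_def by (intro sum_mono component_le_norm_cart)
  then show ?thesis by simp
qed

lemma vnorm1_add: "vnorm1 (x + y) \<le> vnorm1 x + vnorm1 y"
  unfolding vnorm1_def sum.distrib[symmetric]
  by (intro sum_mono) (simp add: abs_triangle_ineq)

lemma vnorm1_zero[simp]: "vnorm1 0 = 0"
  by (simp add: vnorm1_def)

lemma vnorm1_sum: "vnorm1 (\<Sum>j\<in>F. x j) \<le> (\<Sum>j\<in>F. vnorm1 (x j))"
proof (induction F rule: infinite_finite_induct)
  case (insert j F)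
  then show ?case using vnorm1_add[of "x j" "sum x F"] by simp
qed simp_all

lemma vnorm1_minus: "vnorm1 (x - y) = vnorm1 (y - x)"
  unfolding vnorm1_def by (rule sum.cong) (auto simp: abs_minus_commute)

lemma continuous_vnorm1: "continuous_on UNIV vnorm1"
  unfolding vnorm1_def by (intro continuous_intros)

lemma vnorm1_measurable[measurable]: "vnorm1 \<in> borel_measurable borel"
  by (rule borel_measurable_continuous_onI[OF continuous_vnorm1])


lemma summable_on_finsum:
  fixes a :: "'i \<Rightarrow> 'x \<Rightarrow> real"
  assumes "finite I" "\<And>i. i \<in> I \<Longrightarrow> a i summable_on A"
  shows "(\<lambda>x. \<Sum>i\<in>I. a i x) summable_on A"
  using assms
proof (induction I rule: finite_induct)
  case (insert i I)
  then show ?case by (simp add: summable_on_add)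
qed simp

lemma summable_abs_cart:
  fixes a :: "'i \<Rightarrow> real^'d"
  assumes "a summable_on A"
  shows "(\<lambda>x. norm (a x)) summable_on A"
proof -
  have 1: "(\<lambda>x. a x $ i) summable_on A" for i
    by (rule summable_on_bounded_linear[OF bounded_linear_vec_nth assms])
  have "(\<lambda>x. norm (a x $ i)) summable_on A" for i
    by (rule summable_on_iff_abs_summable_on_real[THEN iffD1, OF 1])
  then have "(\<lambda>x. \<Sum>i\<in>UNIV. norm (a x $ i)) summable_on A"
    by (intro summable_on_finsum) auto
  then show ?thesis
    by (rule summable_on_comparison_test) (auto simp: norm_le_l1_cart)
qed

lemma abs_summable_iff_SUP:
  fixes a :: "int \<Rightarrow> real^'d"
  shows "(\<lambda>j. norm (a j)) summable_on UNIV \<longleftrightarrow> (SUP n. \<Sum>j\<in>IS n. ennreal (vnorm1 (a j))) < \<top>"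
proof
  assume as: "(\<lambda>j. norm (a j)) summable_on UNIV"
  have "(\<Sum>j\<in>IS n. ennreal (vnorm1 (a j))) \<le> ennreal (real CARD('d) * infsum (\<lambda>j. norm (a j)) UNIV)" for n
  proof -
    have eq: "(\<Sum>j\<in>IS n. ennreal (vnorm1 (a j))) = ennreal (\<Sum>j\<in>IS n. vnorm1 (a j))"
      by (rule sum_ennreal) simp
    have "(\<Sum>j\<in>IS n. vnorm1 (a j)) \<le> (\<Sum>j\<in>IS n. real CARD('d) * norm (a j))"
      by (intro sum_mono vnorm1_le_norm)
    also have "\<dots> = real CARD('d) * (\<Sum>j\<in>IS n. norm (a j))"
      by (simp add: sum_distrib_left)
    also have "\<dots> \<le> real CARD('d) * infsum (\<lambda>j. norm (a j)) UNIV"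
      using as by (intro mult_left_mono finite_sum_le_infsum) auto
    finally show ?thesis
      unfolding eq by (intro ennreal_leI)
  qed
  then have "(SUP n. \<Sum>j\<in>IS n. ennreal (vnorm1 (a j))) \<le> ennreal (real CARD('d) * infsum (\<lambda>j. norm (a j)) UNIV)"
    by (intro SUP_least)
  then show "(SUP n. \<Sum>j\<in>IS n. ennreal (vnorm1 (a j))) < \<top>"
    by (rule le_less_trans[OF _ ennreal_less_top])
next
  assume fin: "(SUP n. \<Sum>j\<in>IS n. ennreal (vnorm1 (a j))) < \<top>"
  define C where "C = (SUP n. \<Sum>j\<in>IS n. ennreal (vnorm1 (a j)))"
  have bd: "(\<Sum>j\<in>F. norm (a j)) \<le> enn2real C" if fF: "finite F" for F
  proof -
      obtain n where n: "F \<subseteq> IS n" using IS_cover[OF fF] by blast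
      have "(\<Sum>j\<in>F. norm (a j)) \<le> (\<Sum>j\<in>IS n. norm (a j))"
        by (rule sum_mono2) (use n in auto)
      also have "\<dots> \<le> (\<Sum>j\<in>IS n. vnorm1 (a j))"
        by (intro sum_mono norm_le_vnorm1)
      also have "\<dots> \<le> enn2real C"
      proof -
        have "ennreal (\<Sum>j\<in>IS n. vnorm1 (a j)) = (\<Sum>j\<in>IS n. ennreal (vnorm1 (a j)))"
          by (rule sum_ennreal[symmetric]) simp
        also have "\<dots> \<le> C" unfolding C_def by (rule SUP_upper) simp
        finally have "enn2real (ennreal (\<Sum>j\<in>IS n. vnorm1 (a j))) \<le> enn2real C"
          using fin C_def by (intro enn2real_mono) auto
        then show ?thesis by (simp add: sum_nonneg)
      qed
      finally show ?thesis .
  qed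
  have bdd: "bdd_above (sum (\<lambda>j. norm (a j)) ` {F. F \<subseteq> UNIV \<and> finite F})"
    using bd by (intro bdd_aboveI2[where M="enn2real C"]) auto
  show "(\<lambda>j. norm (a j)) summable_on UNIV"
    by (rule nonneg_bdd_above_summable_on[OF _ bdd]) simp
qed


lemma measurable_infsum_int:
  fixes g :: "int \<Rightarrow> 'b \<Rightarrow> real^'d"
  assumes g[measurable]: "\<And>j. g j \<in> borel_measurable N"
  shows "(\<lambda>w. infsum (\<lambda>j. g j w) UNIV) \<in> borel_measurable N"
proof -
  define Bd where "Bd w = ((SUP n. \<Sum>j\<in>IS n. ennreal (vnorm1 (g j w))) < \<top>)" for w
  have eq: "infsum (\<lambda>j. g j w) UNIV = (if Bd w then lim (\<lambda>n. \<Sum>j\<in>IS n. g j w) else 0)" for w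
  proof (cases "Bd w")
    case True
    then have "(\<lambda>j. norm (g j w)) summable_on UNIV"
      unfolding Bd_def by (rule abs_summable_iff_SUP[THEN iffD2])
    then have "(\<lambda>j. g j w) summable_on UNIV" by (rule abs_summable_summable)
    then have "(\<lambda>n. \<Sum>j\<in>IS n. g j w) \<longlonglongrightarrow> infsum (\<lambda>j. g j w) UNIV"
      by (rule infsum_IS_tendsto)
    then show ?thesis using True by (simp add: limI)
  next
    case False
    then have "\<not> (\<lambda>j. norm (g j w)) summable_on UNIV"
      unfolding Bd_def using abs_summable_iff_SUP[of "\<lambda>j. g j w"] by simp
    then have "\<not> (\<lambda>j. g j w) summable_on UNIV"
      using summable_abs_cart[of "\<lambda>j. g j w" UNIV] by auto
    then show ?thesis using False by (simp add: infsum_not_exists)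
  qed
  have [measurable]: "Measurable.pred N Bd" unfolding Bd_def by measurable
  show ?thesis unfolding eq by measurable
qed


lemma mv_bound:
  fixes A :: "real^'d^'d"
  assumes "\<And>p q. \<bar>A $ p $ q\<bar> \<le> c"
  shows "vnorm1 (A *v x) \<le> real CARD('d) * c * vnorm1 x"
proof -
  have "vnorm1 (A *v x) = (\<Sum>p\<in>UNIV. \<bar>\<Sum>q\<in>UNIV. A $ p $ q * x $ q\<bar>)"
    by (simp add: vnorm1_def matrix_vector_mult_def)
  also have "\<dots> \<le> (\<Sum>p\<in>(UNIV::'d set). \<Sum>q\<in>UNIV. c * \<bar>x $ q\<bar>)"
  proof (rule sum_mono)
    fix p :: 'd
    have "\<bar>\<Sum>q\<in>UNIV. A $ p $ q * x $ q\<bar> \<le> (\<Sum>q\<in>UNIV. \<bar>A $ p $ q * x $ q\<bar>)"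
      by (rule sum_abs)
    also have "\<dots> \<le> (\<Sum>q\<in>UNIV. c * \<bar>x $ q\<bar>)"
      by (rule sum_mono) (simp add: abs_mult assms mult_right_mono)
    finally show "\<bar>\<Sum>q\<in>UNIV. A $ p $ q * x $ q\<bar> \<le> (\<Sum>q\<in>UNIV. c * \<bar>x $ q\<bar>)" .
  qed
  also have "\<dots> = real CARD('d) * c * vnorm1 x"
    by (simp add: vnorm1_def sum_distrib_left mult.assoc)
  finally show ?thesis .
qed

lemma mvmult_measurable[measurable (raw)]:
  fixes A :: "real^'d^'d"
  assumes "f \<in> borel_measurable M"
  shows "(\<lambda>x. A *v f x) \<in> borel_measurable M"
proof -
  have "continuous_on UNIV ((*v) A)"
    by (rule linear_continuous_on[OF matrix_vector_mul_bounded_linear])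
  then have "((*v) A) \<in> borel_measurable borel"
    by (rule borel_measurable_continuous_onI)
  from measurable_compose[OF assms this] show ?thesis by simp
qed

lemma sum_insert_le_nonneg:
  fixes f :: "'i \<Rightarrow> real"
  assumes "finite A" "\<And>x. 0 \<le> f x"
  shows "sum f (insert x A) \<le> f x + sum f A"
  using assms by (cases "x \<in> A") (auto simp: insert_absorb)

lemma IS_Suc: "IS (Suc n) = insert (int n) (insert (- int n) (IS n))"
  by (auto simp: IS_def)

lemma geo_IS:
  fixes \<theta> :: real
  assumes "0 < \<theta>" "\<theta> < 1"
  shows "(\<Sum>j\<in>IS n - IS m. \<theta> ^ nat \<bar>j\<bar>) \<le> 2 * (\<theta> ^ m - \<theta> ^ max m n) / (1 - \<theta>)"
proof (induction n)
  case 0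
  then show ?case by (simp add: IS_def)
next
  case (Suc n)
  show ?case
  proof (cases "n < m")
    case True
    then have "IS (Suc n) \<subseteq> IS m" using IS_mono[of "Suc n" m] by auto
    then have emp: "IS (Suc n) - IS m = {}" by blast
    have mx: "max m (Suc n) = m" using True by simp
    show ?thesis unfolding emp mx by simp
  next
    case False
    then have mx: "max m (Suc n) = Suc n" "max m n = n" by auto
    have sub: "IS (Suc n) - IS m \<subseteq> insert (int n) (insert (- int n) (IS n - IS m))"
      unfolding IS_Suc by auto
    have "(\<Sum>j\<in>IS (Suc n) - IS m. \<theta> ^ nat \<bar>j\<bar>)
        \<le> (\<Sum>j\<in>insert (int n) (insert (- int n) (IS n - IS m)). \<theta> ^ nat \<bar>j\<bar>)"
      by (rule sum_mono2) (use sub assms in auto)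
    also have "\<dots> \<le> \<theta> ^ n + (\<theta> ^ n + (\<Sum>j\<in>IS n - IS m. \<theta> ^ nat \<bar>j\<bar>))"
    proof -
      have "(\<Sum>j\<in>insert (int n) (insert (- int n) (IS n - IS m)). \<theta> ^ nat \<bar>j\<bar>)
          \<le> \<theta> ^ nat \<bar>int n\<bar> + (\<Sum>j\<in>insert (- int n) (IS n - IS m). \<theta> ^ nat \<bar>j\<bar>)"
        by (rule sum_insert_le_nonneg) (use assms in auto)
      also have "(\<Sum>j\<in>insert (- int n) (IS n - IS m). \<theta> ^ nat \<bar>j\<bar>)
          \<le> \<theta> ^ nat \<bar>- int n\<bar> + (\<Sum>j\<in>IS n - IS m. \<theta> ^ nat \<bar>j\<bar>)"
        by (rule sum_insert_le_nonneg) (use assms in auto)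
      finally show ?thesis by simp
    qed
    also have "\<dots> \<le> 2 * \<theta> ^ n + 2 * (\<theta> ^ m - \<theta> ^ n) / (1 - \<theta>)"
      using Suc.IH mx by simp
    also have "\<dots> = 2 * (\<theta> ^ m - \<theta> ^ max m (Suc n)) / (1 - \<theta>)"
      using assms mx by (simp add: field_simps)
    finally show ?thesis .
  qed
qed

lemma geo_IS':
  fixes \<theta> :: real
  assumes "0 < \<theta>" "\<theta> < 1"
  shows "(\<Sum>j\<in>IS n - IS m. \<theta> ^ nat \<bar>j\<bar>) \<le> 2 * \<theta> ^ m / (1 - \<theta>)"
proof -
  have "2 * (\<theta> ^ m - \<theta> ^ max m n) / (1 - \<theta>) \<le> 2 * \<theta> ^ m / (1 - \<theta>)"
    using assms by (intro divide_right_mono) auto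
  then show ?thesis using geo_IS[OF assms, of n m] by linarith
qed


lemma tail_pointwise:
  fixes g :: "int \<Rightarrow> real^'d"
  assumes as: "(\<lambda>j. norm (g j)) summable_on UNIV"
  shows "ennreal (vnorm1 (infsum g UNIV - (\<Sum>j\<in>IS m. g j)))
           \<le> (SUP n. \<Sum>j\<in>IS n - IS m. ennreal (vnorm1 (g j)))"
proof -
  have "g summable_on UNIV" using as by (rule abs_summable_summable)
  then have lim: "(\<lambda>n. \<Sum>j\<in>IS n. g j) \<longlonglongrightarrow> infsum g UNIV"
    by (rule infsum_IS_tendsto)
  have "(\<lambda>n. vnorm1 ((\<Sum>j\<in>IS n. g j) - (\<Sum>j\<in>IS m. g j)))
          \<longlonglongrightarrow> vnorm1 (infsum g UNIV - (\<Sum>j\<in>IS m. g j))"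
    unfolding vnorm1_def by (intro tendsto_intros lim)
  then have lim2: "(\<lambda>n. ennreal (vnorm1 ((\<Sum>j\<in>IS n. g j) - (\<Sum>j\<in>IS m. g j))))
          \<longlonglongrightarrow> ennreal (vnorm1 (infsum g UNIV - (\<Sum>j\<in>IS m. g j)))"
    by (rule tendsto_ennrealI)
  show ?thesis
  proof (rule LIMSEQ_le_const2[OF lim2], intro exI[of _ m] allI impI)
    fix n assume "m \<le> n"
    then have sub: "IS m \<subseteq> IS n" by (rule IS_mono)
    have "(\<Sum>j\<in>IS n. g j) - (\<Sum>j\<in>IS m. g j) = (\<Sum>j\<in>IS n - IS m. g j)"
      using sub by (simp add: sum_diff)
    then have "vnorm1 ((\<Sum>j\<in>IS n. g j) - (\<Sum>j\<in>IS m. g j)) \<le> (\<Sum>j\<in>IS n - IS m. vnorm1 (g j))"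
      using vnorm1_sum by metis
    then have "ennreal (vnorm1 ((\<Sum>j\<in>IS n. g j) - (\<Sum>j\<in>IS m. g j)))
               \<le> ennreal (\<Sum>j\<in>IS n - IS m. vnorm1 (g j))"
      by (rule ennreal_leI)
    also have "\<dots> = (\<Sum>j\<in>IS n - IS m. ennreal (vnorm1 (g j)))"
      by (rule sum_ennreal[symmetric]) simp
    also have "\<dots> \<le> (SUP n. \<Sum>j\<in>IS n - IS m. ennreal (vnorm1 (g j)))"
      by (rule SUP_upper) simp
    finally show "ennreal (vnorm1 ((\<Sum>j\<in>IS n. g j) - (\<Sum>j\<in>IS m. g j)))
               \<le> (SUP n. \<Sum>j\<in>IS n - IS m. ennreal (vnorm1 (g j)))" .
  qed
qed

lemma tail_bound:
  fixes v :: "int \<Rightarrow> 'a \<Rightarrow> real^'d" and a :: "int \<Rightarrow> real^'d^'d" and N :: "'a measure"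
  assumes v[measurable]: "\<And>j. v j \<in> borel_measurable N"
    and vE: "\<And>j. (\<integral>\<^sup>+w. ennreal (vnorm1 (v j w)) \<partial>N) \<le> ennreal E1"
    and ab: "\<And>j p q. \<bar>a j $ p $ q\<bar> \<le> b * \<theta> ^ nat \<bar>j\<bar>"
    and th: "0 < \<theta>" "\<theta> < 1" and b0: "0 \<le> b" and E0: "0 \<le> E1"
  shows tail_bound_AE: "AE w in N. (\<lambda>j. norm (a j *v v j w)) summable_on UNIV"
    and tail_bound_int: "(\<integral>\<^sup>+w. ennreal (vnorm1 (infsum (\<lambda>j. a j *v v j w) UNIV - (\<Sum>j\<in>IS m. a j *v v j w))) \<partial>N)
            \<le> ennreal (real CARD('d) * b * E1 * (2 * \<theta> ^ m / (1 - \<theta>)))"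
proof -
  define T where "T m n w = (\<Sum>j\<in>IS n - IS m. ennreal (vnorm1 (a j *v v j w)))" for m n w
  have Tmeas[measurable]: "T m n \<in> borel_measurable N" for m n
    unfolding T_def by measurable
  have Tinc: "incseq (\<lambda>n. T m n)" for m
  proof (rule incseq_SucI)
    fix n
    have "IS n - IS m \<subseteq> IS (Suc n) - IS m" using IS_mono[of n "Suc n"] by auto
    then show "T m n \<le> T m (Suc n)"
      unfolding T_def le_fun_def by (intro allI sum_mono2) auto
  qed
  have single: "(\<integral>\<^sup>+w. ennreal (vnorm1 (a j *v v j w)) \<partial>N)
       \<le> ennreal (real CARD('d) * b * E1 * \<theta> ^ nat \<bar>j\<bar>)" for j
  proof -
    have "(\<integral>\<^sup>+w. ennreal (vnorm1 (a j *v v j w)) \<partial>N)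
        \<le> (\<integral>\<^sup>+w. ennreal (real CARD('d) * (b * \<theta> ^ nat \<bar>j\<bar>)) * ennreal (vnorm1 (v j w)) \<partial>N)"
    proof (rule nn_integral_mono)
      fix w
      have "vnorm1 (a j *v v j w) \<le> real CARD('d) * (b * \<theta> ^ nat \<bar>j\<bar>) * vnorm1 (v j w)"
        by (rule mv_bound) (rule ab)
      then show "ennreal (vnorm1 (a j *v v j w))
          \<le> ennreal (real CARD('d) * (b * \<theta> ^ nat \<bar>j\<bar>)) * ennreal (vnorm1 (v j w))"
        using b0 th by (simp add: ennreal_mult'[symmetric] ennreal_leI)
    qed
    also have "\<dots> = ennreal (real CARD('d) * (b * \<theta> ^ nat \<bar>j\<bar>)) * (\<integral>\<^sup>+w. ennreal (vnorm1 (v j w)) \<partial>N)"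
      by (rule nn_integral_cmult) measurable
    also have "\<dots> \<le> ennreal (real CARD('d) * (b * \<theta> ^ nat \<bar>j\<bar>)) * ennreal E1"
      by (intro mult_left_mono vE) simp
    also have "\<dots> = ennreal (real CARD('d) * b * E1 * \<theta> ^ nat \<bar>j\<bar>)"
      using b0 th E0 by (simp add: ennreal_mult'[symmetric] mult_ac)
    finally show ?thesis .
  qed
  have Tint: "integral\<^sup>N N (T m n) \<le> ennreal (real CARD('d) * b * E1 * (2 * \<theta> ^ m / (1 - \<theta>)))" for m n
  proof -
    have "integral\<^sup>N N (T m n) = (\<Sum>j\<in>IS n - IS m. \<integral>\<^sup>+w. ennreal (vnorm1 (a j *v v j w)) \<partial>N)"
      unfolding T_def by (rule nn_integral_sum) measurable
    also have "\<dots> \<le> (\<Sum>j\<in>IS n - IS m. ennreal (real CARD('d) * b * E1 * \<theta> ^ nat \<bar>j\<bar>))"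
      by (rule sum_mono) (rule single)
    also have "\<dots> = ennreal (\<Sum>j\<in>IS n - IS m. real CARD('d) * b * E1 * \<theta> ^ nat \<bar>j\<bar>)"
      using b0 th E0 by (intro sum_ennreal) simp
    also have "(\<Sum>j\<in>IS n - IS m. real CARD('d) * b * E1 * \<theta> ^ nat \<bar>j\<bar>)
        = real CARD('d) * b * E1 * (\<Sum>j\<in>IS n - IS m. \<theta> ^ nat \<bar>j\<bar>)"
      by (simp add: sum_distrib_left)
    also have "\<dots> \<le> real CARD('d) * b * E1 * (2 * \<theta> ^ m / (1 - \<theta>))"
      using b0 E0 by (intro mult_left_mono geo_IS' th) auto
    finally show ?thesis by (simp add: ennreal_leI)
  qed
  have SUPint: "(\<integral>\<^sup>+w. (SUP n. T m n w) \<partial>N) \<le> ennreal (real CARD('d) * b * E1 * (2 * \<theta> ^ m / (1 - \<theta>)))" for m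
  proof -
    have "(\<integral>\<^sup>+w. (SUP n. T m n w) \<partial>N) = (SUP n. integral\<^sup>N N (T m n))"
      by (rule nn_integral_monotone_convergence_SUP[OF Tinc Tmeas])
    also have "\<dots> \<le> ennreal (real CARD('d) * b * E1 * (2 * \<theta> ^ m / (1 - \<theta>)))"
      by (rule SUP_least) (rule Tint)
    finally show ?thesis .
  qed
  have "AE w in N. (SUP n. T 0 n w) \<noteq> \<infinity>"
  proof (rule nn_integral_PInf_AE)
    show "(\<lambda>w. SUP n. T 0 n w) \<in> borel_measurable N" by measurable
    show "(\<integral>\<^sup>+w. (SUP n. T 0 n w) \<partial>N) \<noteq> \<infinity>"
      using SUPint[of 0] by (metis ennreal_less_top infinity_ennreal_def le_less_trans less_irrefl)
  qed
  then show AE: "AE w in N. (\<lambda>j. norm (a j *v v j w)) summable_on UNIV"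
  proof (rule eventually_mono)
    fix w assume "(SUP n. T 0 n w) \<noteq> \<infinity>"
    moreover have "IS 0 = {}" by (simp add: IS_def)
    ultimately have "(SUP n. \<Sum>j\<in>IS n. ennreal (vnorm1 (a j *v v j w))) \<noteq> \<top>"
      by (simp add: T_def)
    then have "(SUP n. \<Sum>j\<in>IS n. ennreal (vnorm1 (a j *v v j w))) < \<top>"
      by (simp only: top.not_eq_extremum)
    then show "(\<lambda>j. norm (a j *v v j w)) summable_on UNIV"
      by (rule abs_summable_iff_SUP[THEN iffD2])
  qed
  have "(\<integral>\<^sup>+w. ennreal (vnorm1 (infsum (\<lambda>j. a j *v v j w) UNIV - (\<Sum>j\<in>IS m. a j *v v j w))) \<partial>N)
      \<le> (\<integral>\<^sup>+w. (SUP n. T m n w) \<partial>N)"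
  proof (rule nn_integral_mono_AE)
    show "AE w in N. ennreal (vnorm1 (infsum (\<lambda>j. a j *v v j w) UNIV - (\<Sum>j\<in>IS m. a j *v v j w)))
        \<le> (SUP n. T m n w)"
      using AE
    proof (rule eventually_mono)
      fix w assume "(\<lambda>j. norm (a j *v v j w)) summable_on UNIV"
      then show "ennreal (vnorm1 (infsum (\<lambda>j. a j *v v j w) UNIV - (\<Sum>j\<in>IS m. a j *v v j w)))
        \<le> (SUP n. T m n w)"
        unfolding T_def by (rule tail_pointwise)
    qed
  qed
  also have "\<dots> \<le> ennreal (real CARD('d) * b * E1 * (2 * \<theta> ^ m / (1 - \<theta>)))"
    by (rule SUPint)
  finally show "(\<integral>\<^sup>+w. ennreal (vnorm1 (infsum (\<lambda>j. a j *v v j w) UNIV - (\<Sum>j\<in>IS m. a j *v v j w))) \<partial>N)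
            \<le> ennreal (real CARD('d) * b * E1 * (2 * \<theta> ^ m / (1 - \<theta>)))" .
qed


lemma young_simple:
  fixes x y \<delta> :: real
  assumes "0 \<le> x" "0 \<le> y" "0 < \<delta>"
  shows "x * y powr (1 + \<delta>) \<le> x powr (2 + \<delta>) + y powr (2 + \<delta>)"
proof (cases "x \<le> y")
  case True
  have "x * y powr (1 + \<delta>) \<le> y * y powr (1 + \<delta>)"
    using True assms by (intro mult_right_mono) auto
  also have "\<dots> = y powr (2 + \<delta>)"
  proof (cases "y = 0")
    case False
    have e: "y powr (2 + \<delta>) = y powr 1 * y powr (1 + \<delta>)"
      by (subst powr_add[symmetric]) simp
    have "y powr 1 = y" using assms by simp
    then show ?thesis using e by simp
  qed simp
  finally show ?thesis using powr_ge_zero[of x "2 + \<delta>"] by linarith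
next
  case False
  have "x * y powr (1 + \<delta>) \<le> x * x powr (1 + \<delta>)"
    using False assms by (intro mult_left_mono powr_mono2) auto
  also have "\<dots> = x powr (2 + \<delta>)"
  proof (cases "x = 0")
    case False
    have e: "x powr (2 + \<delta>) = x powr 1 * x powr (1 + \<delta>)"
      by (subst powr_add[symmetric]) simp
    have "x powr 1 = x" using assms by simp
    then show ?thesis using e by simp
  qed simp
  finally show ?thesis using powr_ge_zero[of y "2 + \<delta>"] by linarith
qed

lemma pw_ineq:
  fixes y y' z L \<delta> :: real
  assumes L: "0 < L" and d: "0 < \<delta>"
  shows "\<bar>(y - y') * z\<bar> \<le> L * \<bar>y - y'\<bar>
     + L powr (-\<delta>) * (\<bar>y\<bar> powr (2 + \<delta>) + \<bar>y'\<bar> powr (2 + \<delta>) + 2 * \<bar>z\<bar> powr (2 + \<delta>))"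
proof (cases "\<bar>z\<bar> \<le> L")
  case True
  have "\<bar>(y - y') * z\<bar> = \<bar>y - y'\<bar> * \<bar>z\<bar>" by (simp add: abs_mult)
  also have "\<dots> \<le> L * \<bar>y - y'\<bar>"
    using True by (subst mult.commute) (intro mult_right_mono, auto)
  moreover have "0 \<le> L powr (-\<delta>) * (\<bar>y\<bar> powr (2 + \<delta>) + \<bar>y'\<bar> powr (2 + \<delta>) + 2 * \<bar>z\<bar> powr (2 + \<delta>))"
    by (intro mult_nonneg_nonneg add_nonneg_nonneg) auto
  ultimately show ?thesis by linarith
next
  case False
  then have zL: "L < \<bar>z\<bar>" by simp
  have z0: "0 < \<bar>z\<bar>" using zL L by simp
  have "\<bar>z\<bar> \<le> \<bar>z\<bar> * (\<bar>z\<bar> / L) powr \<delta>"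
  proof -
    have "1 \<le> (\<bar>z\<bar> / L) powr \<delta>"
      using zL L d by (intro ge_one_powr_ge_zero) (auto simp: field_simps)
    then show ?thesis using z0 by simp
  qed
  also have "\<bar>z\<bar> * (\<bar>z\<bar> / L) powr \<delta> = L powr (-\<delta>) * \<bar>z\<bar> powr (1 + \<delta>)"
  proof -
    have "(\<bar>z\<bar> / L) powr \<delta> = \<bar>z\<bar> powr \<delta> / L powr \<delta>"
      using L by (simp add: powr_divide)
    moreover have "L powr (-\<delta>) = 1 / L powr \<delta>" by (rule powr_minus_divide)
    moreover have "\<bar>z\<bar> powr (1 + \<delta>) = \<bar>z\<bar> * \<bar>z\<bar> powr \<delta>"
      by (simp add: powr_add)
    ultimately show ?thesis by simp
  qed
  finally have zb: "\<bar>z\<bar> \<le> L powr (-\<delta>) * \<bar>z\<bar> powr (1 + \<delta>)" .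
  have "\<bar>(y - y') * z\<bar> \<le> (\<bar>y\<bar> + \<bar>y'\<bar>) * \<bar>z\<bar>"
    by (simp add: abs_mult mult_right_mono)
  also have "\<dots> \<le> (\<bar>y\<bar> + \<bar>y'\<bar>) * (L powr (-\<delta>) * \<bar>z\<bar> powr (1 + \<delta>))"
    using zb by (intro mult_left_mono) auto
  also have "\<dots> = L powr (-\<delta>) * (\<bar>y\<bar> * \<bar>z\<bar> powr (1 + \<delta>) + \<bar>y'\<bar> * \<bar>z\<bar> powr (1 + \<delta>))"
    by (simp add: algebra_simps)
  also have "\<dots> \<le> L powr (-\<delta>) * ((\<bar>y\<bar> powr (2 + \<delta>) + \<bar>z\<bar> powr (2 + \<delta>)) + (\<bar>y'\<bar> powr (2 + \<delta>) + \<bar>z\<bar> powr (2 + \<delta>)))"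
    using d by (intro mult_left_mono add_mono young_simple) auto
  also have "\<dots> = L powr (-\<delta>) * (\<bar>y\<bar> powr (2 + \<delta>) + \<bar>y'\<bar> powr (2 + \<delta>) + 2 * \<bar>z\<bar> powr (2 + \<delta>))"
    by (simp add: algebra_simps)
  moreover have "0 \<le> L * \<bar>y - y'\<bar>" using L by simp
  ultimately show ?thesis by linarith
qed

lemma abs_le_powr:
  fixes y p :: real
  assumes "1 \<le> p"
  shows "\<bar>y\<bar> \<le> 1 + \<bar>y\<bar> powr p"
proof (cases "\<bar>y\<bar> \<le> 1")
  case True then show ?thesis using powr_ge_zero[of "\<bar>y\<bar>" p] by linarith
next
  case False
  then have "\<bar>y\<bar> = \<bar>y\<bar> powr 1" by simp
  also have "\<dots> \<le> \<bar>y\<bar> powr p" using False assms by (intro powr_mono) auto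
  finally show ?thesis by simp
qed

lemma sq_le_powr:
  fixes t p :: real
  assumes "2 \<le> p" "0 \<le> t"
  shows "t\<^sup>2 \<le> 1 + t powr p"
proof (cases "t \<le> 1")
  case True
  then have "t\<^sup>2 \<le> 1" using assms by (simp add: power_le_one)
  then show ?thesis using powr_ge_zero[of t p] by linarith
next
  case False
  then have "t\<^sup>2 = t powr 2" using assms by (simp add: powr_realpow)
  also have "\<dots> \<le> t powr p" using False assms by (intro powr_mono) auto
  finally show ?thesis by simp
qed

lemma prod_le_powr:
  fixes y z p :: real
  assumes "2 \<le> p"
  shows "\<bar>y * z\<bar> \<le> 2 + \<bar>y\<bar> powr p + \<bar>z\<bar> powr p"
proof -
  have "\<bar>y * z\<bar> \<le> \<bar>y\<bar>\<^sup>2 + \<bar>z\<bar>\<^sup>2"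
  proof -
    have "0 \<le> (\<bar>y\<bar> - \<bar>z\<bar>)\<^sup>2" by simp
    then have "2 * (\<bar>y\<bar> * \<bar>z\<bar>) \<le> \<bar>y\<bar>\<^sup>2 + \<bar>z\<bar>\<^sup>2" unfolding power2_diff by simp
    moreover have "0 \<le> \<bar>y\<bar> * \<bar>z\<bar>" by simp
    ultimately have "\<bar>y\<bar> * \<bar>z\<bar> \<le> \<bar>y\<bar>\<^sup>2 + \<bar>z\<bar>\<^sup>2" by linarith
    then show ?thesis by (simp add: abs_mult)
  qed
  also have "\<dots> \<le> (1 + \<bar>y\<bar> powr p) + (1 + \<bar>z\<bar> powr p)"
    using assms by (intro add_mono sq_le_powr) auto
  finally show ?thesis by simp
qed


lemma (in prob_space) int_of_pow:
  fixes f :: "'a \<Rightarrow> real"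
  assumes [measurable]: "f \<in> borel_measurable M" and i: "integrable M (\<lambda>w. \<bar>f w\<bar> powr p)" and p: "1 \<le> p"
  shows "integrable M f"
proof (rule Bochner_Integration.integrable_bound)
  show "integrable M (\<lambda>w. 1 + \<bar>f w\<bar> powr p)" using i by simp
  show "AE w in M. norm (f w) \<le> norm (1 + \<bar>f w\<bar> powr p)"
  proof (rule AE_I2)
    fix w
    have "\<bar>f w\<bar> \<le> 1 + \<bar>f w\<bar> powr p" by (rule abs_le_powr[OF p])
    moreover have "0 \<le> 1 + \<bar>f w\<bar> powr p" using powr_ge_zero[of "\<bar>f w\<bar>" p] by linarith
    ultimately show "norm (f w) \<le> norm (1 + \<bar>f w\<bar> powr p)" by simp
  qed
qed simp

lemma (in prob_space) int_prod_pow: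
  fixes f g :: "'a \<Rightarrow> real"
  assumes [measurable]: "f \<in> borel_measurable M" "g \<in> borel_measurable M"
    and i: "integrable M (\<lambda>w. \<bar>f w\<bar> powr p)" "integrable M (\<lambda>w. \<bar>g w\<bar> powr p)" and p: "2 \<le> p"
  shows "integrable M (\<lambda>w. f w * g w)"
proof (rule Bochner_Integration.integrable_bound)
  show "integrable M (\<lambda>w. 2 + \<bar>f w\<bar> powr p + \<bar>g w\<bar> powr p)" using i by simp
  show "AE w in M. norm (f w * g w) \<le> norm (2 + \<bar>f w\<bar> powr p + \<bar>g w\<bar> powr p)"
  proof (rule AE_I2)
    fix w
    have "\<bar>f w * g w\<bar> \<le> 2 + \<bar>f w\<bar> powr p + \<bar>g w\<bar> powr p" by (rule prod_le_powr[OF p])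
    moreover have "0 \<le> 2 + \<bar>f w\<bar> powr p + \<bar>g w\<bar> powr p"
      using powr_ge_zero[of "\<bar>f w\<bar>" p] powr_ge_zero[of "\<bar>g w\<bar>" p] by linarith
    ultimately show "norm (f w * g w) \<le> norm (2 + \<bar>f w\<bar> powr p + \<bar>g w\<bar> powr p)" by simp
  qed
qed simp

lemma (in prob_space) abs_int_le:
  fixes f :: "'a \<Rightarrow> real"
  assumes [measurable]: "f \<in> borel_measurable M" and i: "integrable M (\<lambda>w. \<bar>f w\<bar> powr p)" and p: "1 \<le> p"
  shows "\<bar>\<integral>w. f w \<partial>M\<bar> \<le> 1 + (\<integral>w. \<bar>f w\<bar> powr p \<partial>M)"
proof -
  have fi: "integrable M f" by (rule int_of_pow[OF _ i p]) simp
  have "\<bar>\<integral>w. f w \<partial>M\<bar> \<le> (\<integral>w. \<bar>f w\<bar> \<partial>M)" by (rule integral_abs_bound)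
  also have "\<dots> \<le> (\<integral>w. 1 + \<bar>f w\<bar> powr p \<partial>M)"
    using fi i by (intro integral_mono) (auto intro: abs_le_powr[OF p])
  also have "\<dots> = 1 + (\<integral>w. \<bar>f w\<bar> powr p \<partial>M)"
    using i by (simp add: prob_space)
  finally show ?thesis .
qed

lemma (in prob_space) cross_bound:
  fixes Y Y' Z :: "'a \<Rightarrow> real"
  assumes [measurable]: "Y \<in> borel_measurable M" "Y' \<in> borel_measurable M" "Z \<in> borel_measurable M"
    and iY: "integrable M (\<lambda>w. \<bar>Y w\<bar> powr (2 + \<delta>))"
    and iY': "integrable M (\<lambda>w. \<bar>Y' w\<bar> powr (2 + \<delta>))"
    and iZ: "integrable M (\<lambda>w. \<bar>Z w\<bar> powr (2 + \<delta>))"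
    and kY: "(\<integral>w. \<bar>Y w\<bar> powr (2 + \<delta>) \<partial>M) \<le> K"
    and kY': "(\<integral>w. \<bar>Y' w\<bar> powr (2 + \<delta>) \<partial>M) \<le> K"
    and kZ: "(\<integral>w. \<bar>Z w\<bar> powr (2 + \<delta>) \<partial>M) \<le> K"
    and e: "(\<integral>w. \<bar>Y w - Y' w\<bar> \<partial>M) \<le> \<epsilon>"
    and L: "0 < L" and d: "0 < \<delta>"
  shows "\<bar>\<integral>w. (Y w - Y' w) * Z w \<partial>M\<bar> \<le> L * \<epsilon> + 4 * K * L powr (-\<delta>)"
proof -
  have p1: "1 \<le> 2 + \<delta>" "2 \<le> 2 + \<delta>" using d by auto
  have Yi: "integrable M Y" by (rule int_of_pow[OF _ iY p1(1)]) simp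
  have Y'i: "integrable M Y'" by (rule int_of_pow[OF _ iY' p1(1)]) simp
  have YZ: "integrable M (\<lambda>w. Y w * Z w)" by (rule int_prod_pow[OF _ _ iY iZ p1(2)]) simp_all
  have Y'Z: "integrable M (\<lambda>w. Y' w * Z w)" by (rule int_prod_pow[OF _ _ iY' iZ p1(2)]) simp_all
  have DZ: "integrable M (\<lambda>w. (Y w - Y' w) * Z w)"
    using YZ Y'Z by (simp add: left_diff_distrib)
  have "\<bar>\<integral>w. (Y w - Y' w) * Z w \<partial>M\<bar> \<le> (\<integral>w. \<bar>(Y w - Y' w) * Z w\<bar> \<partial>M)"
    by (rule integral_abs_bound)
  also have "\<dots> \<le> (\<integral>w. L * \<bar>Y w - Y' w\<bar> + L powr (-\<delta>) *
       (\<bar>Y w\<bar> powr (2 + \<delta>) + \<bar>Y' w\<bar> powr (2 + \<delta>) + 2 * \<bar>Z w\<bar> powr (2 + \<delta>)) \<partial>M)"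
    using DZ Yi Y'i iY iY' iZ by (intro integral_mono pw_ineq L d) auto
  also have "\<dots> = L * (\<integral>w. \<bar>Y w - Y' w\<bar> \<partial>M) + L powr (-\<delta>) *
       ((\<integral>w. \<bar>Y w\<bar> powr (2 + \<delta>) \<partial>M) + (\<integral>w. \<bar>Y' w\<bar> powr (2 + \<delta>) \<partial>M) + 2 * (\<integral>w. \<bar>Z w\<bar> powr (2 + \<delta>) \<partial>M))"
    using Yi Y'i iY iY' iZ by simp
  also have "\<dots> \<le> L * \<epsilon> + L powr (-\<delta>) * (K + K + 2 * K)"
    using e kY kY' kZ L by (intro add_mono mult_left_mono) auto
  finally show ?thesis by (simp add: algebra_simps)
qed


lemma (in prob_space) cov_core:
  fixes Y Y' Z Z' :: "'a \<Rightarrow> real"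
  assumes [measurable]: "Y \<in> borel_measurable M" "Y' \<in> borel_measurable M"
      "Z \<in> borel_measurable M" "Z' \<in> borel_measurable M"
    and iY: "integrable M (\<lambda>w. \<bar>Y w\<bar> powr (2 + \<delta>))"
    and iY': "integrable M (\<lambda>w. \<bar>Y' w\<bar> powr (2 + \<delta>))"
    and iZ: "integrable M (\<lambda>w. \<bar>Z w\<bar> powr (2 + \<delta>))"
    and iZ': "integrable M (\<lambda>w. \<bar>Z' w\<bar> powr (2 + \<delta>))"
    and kY: "(\<integral>w. \<bar>Y w\<bar> powr (2 + \<delta>) \<partial>M) \<le> K"
    and kY': "(\<integral>w. \<bar>Y' w\<bar> powr (2 + \<delta>) \<partial>M) \<le> K"
    and kZ: "(\<integral>w. \<bar>Z w\<bar> powr (2 + \<delta>) \<partial>M) \<le> K"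
    and kZ': "(\<integral>w. \<bar>Z' w\<bar> powr (2 + \<delta>) \<partial>M) \<le> K"
    and eY: "(\<integral>w. \<bar>Y w - Y' w\<bar> \<partial>M) \<le> \<epsilon>"
    and eZ: "(\<integral>w. \<bar>Z w - Z' w\<bar> \<partial>M) \<le> \<epsilon>"
    and ind: "(\<integral>w. Y' w * Z' w \<partial>M) = (\<integral>w. Y' w \<partial>M) * (\<integral>w. Z' w \<partial>M)"
    and L: "0 < L" and d: "0 < \<delta>"
  shows "\<bar>cov M Y Z\<bar> \<le> 2 * (L * \<epsilon> + 4 * K * L powr (-\<delta>)) + 2 * \<epsilon> * (1 + K)"
proof -
  have p1: "1 \<le> 2 + \<delta>" "2 \<le> 2 + \<delta>" using d by auto
  have Yi: "integrable M Y" by (rule int_of_pow[OF _ iY p1(1)]) simp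
  have Y'i: "integrable M Y'" by (rule int_of_pow[OF _ iY' p1(1)]) simp
  have Zi: "integrable M Z" by (rule int_of_pow[OF _ iZ p1(1)]) simp
  have Z'i: "integrable M Z'" by (rule int_of_pow[OF _ iZ' p1(1)]) simp
  have YZ: "integrable M (\<lambda>w. Y w * Z w)" by (rule int_prod_pow[OF _ _ iY iZ p1(2)]) simp_all
  have Y'Z: "integrable M (\<lambda>w. Y' w * Z w)" by (rule int_prod_pow[OF _ _ iY' iZ p1(2)]) simp_all
  have Y'Z': "integrable M (\<lambda>w. Y' w * Z' w)" by (rule int_prod_pow[OF _ _ iY' iZ' p1(2)]) simp_all
  define A1 where "A1 = (\<integral>w. (Y w - Y' w) * Z w \<partial>M)"
  define A2 where "A2 = (\<integral>w. (Z w - Z' w) * Y' w \<partial>M)"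
  have a1: "\<bar>A1\<bar> \<le> L * \<epsilon> + 4 * K * L powr (-\<delta>)"
    unfolding A1_def by (rule cross_bound[OF _ _ _ iY iY' iZ kY kY' kZ eY L d]) simp_all
  have a2: "\<bar>A2\<bar> \<le> L * \<epsilon> + 4 * K * L powr (-\<delta>)"
    unfolding A2_def by (rule cross_bound[OF _ _ _ iZ iZ' iY' kZ kZ' kY' eZ L d]) simp_all
  have A1e: "A1 = (\<integral>w. Y w * Z w \<partial>M) - (\<integral>w. Y' w * Z w \<partial>M)"
    unfolding A1_def left_diff_distrib using YZ Y'Z by (rule Bochner_Integration.integral_diff)
  have A2e: "A2 = (\<integral>w. Y' w * Z w \<partial>M) - (\<integral>w. Y' w * Z' w \<partial>M)"
  proof -
    have "A2 = (\<integral>w. Y' w * Z w - Y' w * Z' w \<partial>M)"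
      unfolding A2_def by (simp add: algebra_simps)
    also have "\<dots> = (\<integral>w. Y' w * Z w \<partial>M) - (\<integral>w. Y' w * Z' w \<partial>M)"
      using Y'Z Y'Z' by (rule Bochner_Integration.integral_diff)
    finally show ?thesis .
  qed
  have b1: "\<bar>(\<integral>w. Y w \<partial>M) - (\<integral>w. Y' w \<partial>M)\<bar> \<le> \<epsilon>"
  proof -
    have "(\<integral>w. Y w \<partial>M) - (\<integral>w. Y' w \<partial>M) = (\<integral>w. Y w - Y' w \<partial>M)"
      using Yi Y'i by (rule Bochner_Integration.integral_diff[symmetric])
    also have "\<bar>\<dots>\<bar> \<le> (\<integral>w. \<bar>Y w - Y' w\<bar> \<partial>M)" by (rule integral_abs_bound)
    finally show ?thesis using eY by linarith
  qed
  have b2: "\<bar>(\<integral>w. Z w \<partial>M) - (\<integral>w. Z' w \<partial>M)\<bar> \<le> \<epsilon>"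
  proof -
    have "(\<integral>w. Z w \<partial>M) - (\<integral>w. Z' w \<partial>M) = (\<integral>w. Z w - Z' w \<partial>M)"
      using Zi Z'i by (rule Bochner_Integration.integral_diff[symmetric])
    also have "\<bar>\<dots>\<bar> \<le> (\<integral>w. \<bar>Z w - Z' w\<bar> \<partial>M)" by (rule integral_abs_bound)
    finally show ?thesis using eZ by linarith
  qed
  have cZ: "\<bar>\<integral>w. Z w \<partial>M\<bar> \<le> 1 + K"
    using abs_int_le[OF _ iZ p1(1)] kZ by simp
  have cY': "\<bar>\<integral>w. Y' w \<partial>M\<bar> \<le> 1 + K"
    using abs_int_le[OF _ iY' p1(1)] kY' by simp
  have e0: "0 \<le> \<epsilon>" using b1 by linarith
  have K1: "0 \<le> 1 + K" using cZ by linarith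
  define B1 where "B1 = (\<integral>w. Y w \<partial>M) - (\<integral>w. Y' w \<partial>M)"
  define B2 where "B2 = (\<integral>w. Z w \<partial>M) - (\<integral>w. Z' w \<partial>M)"
  have m1: "\<bar>B1 * (\<integral>w. Z w \<partial>M)\<bar> \<le> \<epsilon> * (1 + K)"
    unfolding abs_mult B1_def using b1 cZ e0 K1 by (intro mult_mono) auto
  have m2: "\<bar>(\<integral>w. Y' w \<partial>M) * B2\<bar> \<le> (1 + K) * \<epsilon>"
    unfolding abs_mult B2_def using b2 cY' e0 K1 by (intro mult_mono) auto
  have "cov M Y Z = A1 + A2 - B1 * (\<integral>w. Z w \<partial>M) - (\<integral>w. Y' w \<partial>M) * B2"
    unfolding cov_def A1e A2e B1_def B2_def using ind by (simp add: algebra_simps)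
  then have "\<bar>cov M Y Z\<bar> \<le> \<bar>A1\<bar> + \<bar>A2\<bar> + \<bar>B1 * (\<integral>w. Z w \<partial>M)\<bar> + \<bar>(\<integral>w. Y' w \<partial>M) * B2\<bar>"
    by linarith
  then show ?thesis using a1 a2 m1 m2 by (simp add: algebra_simps)
qed


lemma meas_UNIV_fun:
  assumes "\<And>i. X i \<in> measurable N (M i)"
  shows "(\<lambda>x i. X i x) \<in> measurable N (Pi\<^sub>M UNIV M)"
proof -
  have "(\<lambda>x. \<lambda>i\<in>UNIV. X i x) \<in> measurable N (Pi\<^sub>M UNIV M)"
    using assms by (intro measurable_restrict) auto
  then show ?thesis by (simp add: restrict_UNIV)
qed

lemma shift_law:
  fixes eps :: "int \<Rightarrow> 'a \<Rightarrow> real^'d"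
  assumes prob: "prob_space M"
    and eps_rv: "\<And>t. eps t \<in> borel_measurable M"
    and eps_indep: "prob_space.indep_vars M (\<lambda>_. borel) eps UNIV"
    and eps_ident: "\<And>t. distr M borel (eps t) = distr M borel (eps 1)"
  shows "distr M (Pi\<^sub>M UNIV (\<lambda>_. borel)) (\<lambda>w i. eps (i + h) w)
       = distr M (Pi\<^sub>M UNIV (\<lambda>_. borel)) (\<lambda>w i. eps i w)"
proof -
  interpret prob_space M by (rule prob)
  define D where "D = distr M borel (eps 1)"
  have D: "prob_space D" unfolding D_def by (intro prob_space_distr eps_rv)
  have law0: "distr M (Pi\<^sub>M UNIV (\<lambda>_. borel)) (\<lambda>w i. eps i w) = Pi\<^sub>M UNIV (\<lambda>_. D)"
  proof -
    have "distr M (Pi\<^sub>M UNIV (\<lambda>_. borel)) (\<lambda>w. \<lambda>i\<in>UNIV. eps i w) = Pi\<^sub>M UNIV (\<lambda>i. distr M borel (eps i))"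
      using eps_indep by (intro indep_vars_iff_distr_eq_PiM[THEN iffD1] eps_rv) auto
    also have "\<dots> = Pi\<^sub>M UNIV (\<lambda>_. D)"
      unfolding D_def by (intro PiM_cong refl eps_ident)
    finally show ?thesis by (simp add: restrict_UNIV)
  qed
  have m0: "(\<lambda>w i. eps i w) \<in> measurable M (Pi\<^sub>M UNIV (\<lambda>_. borel))"
    by (rule meas_UNIV_fun) (rule eps_rv)
  have msh: "(\<lambda>\<omega> i. \<omega> (i + h)) \<in> measurable (Pi\<^sub>M UNIV (\<lambda>_. borel)) (Pi\<^sub>M UNIV (\<lambda>_::int. borel :: (real^'d) measure))"
    by (rule meas_UNIV_fun) (rule measurable_component_singleton, simp)
  have "distr M (Pi\<^sub>M UNIV (\<lambda>_. borel)) (\<lambda>w i. eps (i + h) w)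
      = distr M (Pi\<^sub>M UNIV (\<lambda>_. borel)) ((\<lambda>\<omega> i. \<omega> (i + h)) \<circ> (\<lambda>w i. eps i w))"
    by (simp add: comp_def)
  also have "\<dots> = distr (distr M (Pi\<^sub>M UNIV (\<lambda>_. borel)) (\<lambda>w i. eps i w)) (Pi\<^sub>M UNIV (\<lambda>_. borel)) (\<lambda>\<omega> i. \<omega> (i + h))"
    by (rule distr_distr[OF msh m0, symmetric])
  also have "\<dots> = distr (Pi\<^sub>M UNIV (\<lambda>_. D)) (Pi\<^sub>M UNIV (\<lambda>_. borel)) (\<lambda>\<omega> i. \<omega> (i + h))"
    by (simp add: law0)
  also have "\<dots> = distr (Pi\<^sub>M UNIV (\<lambda>_. D)) (Pi\<^sub>M UNIV (\<lambda>i. (\<lambda>_. D) (i + h))) (\<lambda>\<omega>. \<lambda>n\<in>UNIV. \<omega> (n + h))"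
  proof (rule distr_cong)
    show "sets (Pi\<^sub>M UNIV (\<lambda>_. borel)) = sets (Pi\<^sub>M UNIV (\<lambda>i. (\<lambda>_. D) (i + h)))"
      by (intro sets_PiM_cong) (simp_all add: D_def)
  qed (simp_all add: restrict_UNIV)
  also have "\<dots> = Pi\<^sub>M UNIV (\<lambda>i. (\<lambda>_. D) (i + h))"
    by (rule distr_PiM_reindex) (auto simp: D inj_on_def)
  also have "\<dots> = distr M (Pi\<^sub>M UNIV (\<lambda>_. borel)) (\<lambda>w i. eps i w)"
    by (simp add: law0)
  finally show ?thesis .
qed

lemma shift_transfer:
  fixes eps :: "int \<Rightarrow> 'a \<Rightarrow> real^'d" and \<Phi> :: "(int \<Rightarrow> real^'d) \<Rightarrow> real"
  assumes law: "distr M (Pi\<^sub>M UNIV (\<lambda>_. borel)) (\<lambda>w i. eps (i + h) w)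
       = distr M (Pi\<^sub>M UNIV (\<lambda>_. borel)) (\<lambda>w i. eps i w)"
    and eps_rv: "\<And>t. eps t \<in> borel_measurable M"
    and \<Phi>: "\<Phi> \<in> borel_measurable (Pi\<^sub>M UNIV (\<lambda>_. borel))"
  shows "integrable M (\<lambda>w. \<Phi> (\<lambda>i. eps (i + h) w)) \<longleftrightarrow> integrable M (\<lambda>w. \<Phi> (\<lambda>i. eps i w))"
    and "(\<integral>w. \<Phi> (\<lambda>i. eps (i + h) w) \<partial>M) = (\<integral>w. \<Phi> (\<lambda>i. eps i w) \<partial>M)"
proof -
  have m0: "(\<lambda>w i. eps i w) \<in> measurable M (Pi\<^sub>M UNIV (\<lambda>_. borel))"
    by (rule meas_UNIV_fun) (rule eps_rv)
  have mh: "(\<lambda>w i. eps (i + h) w) \<in> measurable M (Pi\<^sub>M UNIV (\<lambda>_. borel))"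
    by (rule meas_UNIV_fun) (rule eps_rv)
  have "integrable M (\<lambda>w. \<Phi> (\<lambda>i. eps (i + h) w)) \<longleftrightarrow>
        integrable (distr M (Pi\<^sub>M UNIV (\<lambda>_. borel)) (\<lambda>w i. eps (i + h) w)) \<Phi>"
    by (rule integrable_distr_eq[OF mh \<Phi>, symmetric])
  also have "\<dots> \<longleftrightarrow> integrable (distr M (Pi\<^sub>M UNIV (\<lambda>_. borel)) (\<lambda>w i. eps i w)) \<Phi>"
    by (simp only: law)
  also have "\<dots> \<longleftrightarrow> integrable M (\<lambda>w. \<Phi> (\<lambda>i. eps i w))"
    by (rule integrable_distr_eq[OF m0 \<Phi>])
  finally show "integrable M (\<lambda>w. \<Phi> (\<lambda>i. eps (i + h) w)) \<longleftrightarrow> integrable M (\<lambda>w. \<Phi> (\<lambda>i. eps i w))" .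
  have "(\<integral>w. \<Phi> (\<lambda>i. eps (i + h) w) \<partial>M) = integral\<^sup>L (distr M (Pi\<^sub>M UNIV (\<lambda>_. borel)) (\<lambda>w i. eps (i + h) w)) \<Phi>"
    by (rule integral_distr[OF mh \<Phi>, symmetric])
  also have "\<dots> = integral\<^sup>L (distr M (Pi\<^sub>M UNIV (\<lambda>_. borel)) (\<lambda>w i. eps i w)) \<Phi>"
    by (simp only: law)
  also have "\<dots> = (\<integral>w. \<Phi> (\<lambda>i. eps i w) \<partial>M)"
    by (rule integral_distr[OF m0 \<Phi>])
  finally show "(\<integral>w. \<Phi> (\<lambda>i. eps (i + h) w) \<partial>M) = (\<integral>w. \<Phi> (\<lambda>i. eps i w) \<partial>M)" .
qed

lemma lip_cont:
  fixes g :: "real^'d \<Rightarrow> real"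
  assumes "\<And>x y. \<bar>g x - g y\<bar> \<le> C * vnorm1 (x - y)"
  shows "continuous_on UNIV g"
proof -
  have "(max C 0 * real CARD('d))-lipschitz_on UNIV g"
  proof (rule lipschitz_onI)
    fix x y :: "real^'d"
    have "dist (g x) (g y) = \<bar>g x - g y\<bar>" by (simp add: dist_real_def)
    also have "\<dots> \<le> C * vnorm1 (x - y)" by (rule assms)
    also have "\<dots> \<le> max C 0 * vnorm1 (x - y)" by (intro mult_right_mono) auto
    also have "\<dots> \<le> max C 0 * (real CARD('d) * norm (x - y))"
      by (intro mult_left_mono vnorm1_le_norm) auto
    also have "\<dots> = max C 0 * real CARD('d) * dist x y" by (simp add: dist_norm)
    finally show "dist (g x) (g y) \<le> max C 0 * real CARD('d) * dist x y" .
  qed auto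
  then show ?thesis by (rule lipschitz_on_continuous_on)
qed


lemma (in prob_space) diff_bound:
  fixes F G :: "'a \<Rightarrow> real"
  assumes Fi: "integrable M F" and G[measurable]: "G \<in> borel_measurable M"
    and FG: "\<And>w. 0 \<le> F w \<and> F w \<le> Cp * G w"
    and Gb: "(\<integral>\<^sup>+w. ennreal (G w) \<partial>M) \<le> ennreal r"
    and Cp: "0 \<le> Cp" and r: "0 \<le> r"
  shows "(\<integral>w. F w \<partial>M) \<le> Cp * r"
proof -
  have "ennreal (\<integral>w. F w \<partial>M) = (\<integral>\<^sup>+w. ennreal (F w) \<partial>M)"
    using Fi FG by (intro nn_integral_eq_integral[symmetric]) auto
  also have "\<dots> \<le> (\<integral>\<^sup>+w. ennreal Cp * ennreal (G w) \<partial>M)"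
  proof (rule nn_integral_mono)
    fix w
    have "ennreal (F w) \<le> ennreal (Cp * G w)" using FG[of w] by (intro ennreal_leI) auto
    also have "\<dots> = ennreal Cp * ennreal (G w)"
      using Cp by (simp add: ennreal_mult')
    finally show "ennreal (F w) \<le> ennreal Cp * ennreal (G w)" .
  qed
  also have "\<dots> = ennreal Cp * (\<integral>\<^sup>+w. ennreal (G w) \<partial>M)"
    by (rule nn_integral_cmult) measurable
  also have "\<dots> \<le> ennreal Cp * ennreal r"
    by (intro mult_left_mono Gb) simp
  also have "\<dots> = ennreal (Cp * r)" using Cp r by (simp add: ennreal_mult)
  finally show ?thesis using Cp r by (simp add: ennreal_le_iff)
qed

lemma indep_part:
  fixes eps :: "int \<Rightarrow> 'a \<Rightarrow> real^'d"
    and F1 F2 :: "(int \<Rightarrow> real^'d) \<Rightarrow> real"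
  assumes prob: "prob_space M"
    and eps_rv: "\<And>t. eps t \<in> borel_measurable M"
    and eps_indep: "prob_space.indep_vars M (\<lambda>_. borel) eps UNIV"
    and J: "J1 \<inter> J2 = {}"
    and F1: "F1 \<in> borel_measurable (Pi\<^sub>M J1 (\<lambda>_. borel))"
    and F2: "F2 \<in> borel_measurable (Pi\<^sub>M J2 (\<lambda>_. borel))"
    and i1: "integrable M (\<lambda>w. F1 (restrict (\<lambda>i. eps i w) J1))"
    and i2: "integrable M (\<lambda>w. F2 (restrict (\<lambda>i. eps i w) J2))"
  shows "(\<integral>w. F1 (restrict (\<lambda>i. eps i w) J1) * F2 (restrict (\<lambda>i. eps i w) J2) \<partial>M)
       = (\<integral>w. F1 (restrict (\<lambda>i. eps i w) J1) \<partial>M) * (\<integral>w. F2 (restrict (\<lambda>i. eps i w) J2) \<partial>M)"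
proof -
  interpret prob_space M by (rule prob)
  have "indep_var (Pi\<^sub>M J1 (\<lambda>_. borel)) (\<lambda>w. restrict (\<lambda>i. eps i w) J1)
                  (Pi\<^sub>M J2 (\<lambda>_. borel)) (\<lambda>w. restrict (\<lambda>i. eps i w) J2)"
    using J by (intro indep_var_restrict[OF eps_indep]) auto
  from indep_var_compose[OF this F1 F2]
  have ind: "indep_var borel (\<lambda>w. F1 (restrict (\<lambda>i. eps i w) J1)) borel (\<lambda>w. F2 (restrict (\<lambda>i. eps i w) J2))"
    by (simp add: comp_def)
  show ?thesis by (rule indep_var_lebesgue_integral[OF ind i1 i2])
qed


lemma final_arith:
  fixes \<theta> \<delta> c' K x :: real and m :: nat
  assumes th: "0 < \<theta>" "\<theta> < 1" and d: "0 < \<delta>" and c: "0 \<le> c'" and K: "0 \<le> K"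
    and x: "x \<le> 2 * real m"
  shows "2 * (\<theta> powr (- (real m / (1 + \<delta>))) * (c' * \<theta> ^ m)
            + 4 * K * (\<theta> powr (- (real m / (1 + \<delta>)))) powr (-\<delta>))
          + 2 * (c' * \<theta> ^ m) * (1 + K)
        \<le> (2 * c' + 8 * \<bar>K\<bar> + 2 * c' * (1 + \<bar>K\<bar>)) * \<theta> powr (x * \<delta> / (2 * (1 + \<delta>)))"
proof -
  define q where "q = \<theta> powr (real m * \<delta> / (1 + \<delta>))"
  have q0: "0 \<le> q" unfolding q_def by simp
  have tm: "\<theta> ^ m = \<theta> powr real m" using th by (simp add: powr_realpow)
  have e1: "\<theta> powr (- (real m / (1 + \<delta>))) * \<theta> ^ m = q"
  proof -
    have "\<theta> powr (- (real m / (1 + \<delta>))) * \<theta> ^ m = \<theta> powr (- (real m / (1 + \<delta>)) + real m)"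
      unfolding tm by (rule powr_add[symmetric])
    also have "- (real m / (1 + \<delta>)) + real m = real m * \<delta> / (1 + \<delta>)"
      using d by (simp add: field_simps)
    finally show ?thesis unfolding q_def .
  qed
  have e2: "(\<theta> powr (- (real m / (1 + \<delta>)))) powr (-\<delta>) = q"
  proof -
    have "(\<theta> powr (- (real m / (1 + \<delta>)))) powr (-\<delta>) = \<theta> powr (- (real m / (1 + \<delta>)) * - \<delta>)"
      by (simp add: powr_powr)
    also have "- (real m / (1 + \<delta>)) * - \<delta> = real m * \<delta> / (1 + \<delta>)" by simp
    finally show ?thesis unfolding q_def .
  qed
  have e3: "\<theta> ^ m \<le> q"
  proof -
    have "real m * \<delta> / (1 + \<delta>) \<le> real m"
      using d by (simp add: field_simps)
    then have "\<theta> powr real m \<le> \<theta> powr (real m * \<delta> / (1 + \<delta>))"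
      using th by (intro powr_mono') auto
    then show ?thesis unfolding tm q_def .
  qed
  have e4: "q \<le> \<theta> powr (x * \<delta> / (2 * (1 + \<delta>)))"
  proof -
    have "x * \<delta> \<le> (2 * real m) * \<delta>" using d x by (intro mult_right_mono) auto
    then have "x * \<delta> / (2 * (1 + \<delta>)) \<le> (2 * real m) * \<delta> / (2 * (1 + \<delta>))"
      using d by (intro divide_right_mono) auto
    also have "\<dots> = real m * \<delta> / (1 + \<delta>)" using d by (simp add: field_simps)
    finally have "x * \<delta> / (2 * (1 + \<delta>)) \<le> real m * \<delta> / (1 + \<delta>)" .
    then show ?thesis unfolding q_def using th by (intro powr_mono') auto
  qed
  have "2 * (\<theta> powr (- (real m / (1 + \<delta>))) * (c' * \<theta> ^ m)
            + 4 * K * (\<theta> powr (- (real m / (1 + \<delta>)))) powr (-\<delta>))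
          + 2 * (c' * \<theta> ^ m) * (1 + K)
        = 2 * (c' * q + 4 * K * q) + 2 * c' * (1 + K) * \<theta> ^ m"
    using e1 e2 by (simp add: algebra_simps)
  also have "\<dots> \<le> 2 * (c' * q + 4 * K * q) + 2 * c' * (1 + K) * q"
    using e3 c K by (intro add_left_mono mult_left_mono) auto
  also have "\<dots> = (2 * c' + 8 * \<bar>K\<bar> + 2 * c' * (1 + \<bar>K\<bar>)) * q"
    using K by (simp add: algebra_simps)
  also have "\<dots> \<le> (2 * c' + 8 * \<bar>K\<bar> + 2 * c' * (1 + \<bar>K\<bar>)) * \<theta> powr (x * \<delta> / (2 * (1 + \<delta>)))"
    using e4 c by (intro mult_left_mono) auto
  finally show ?thesis .
qed


lemma comp_meas[measurable]:
  "(\<lambda>e::int \<Rightarrow> real^'d. e i) \<in> borel_measurable (Pi\<^sub>M UNIV (\<lambda>_. borel))"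
  by (rule measurable_component_singleton) simp

theorem lemma3:
  fixes M :: "'a measure"
    and eps :: "int \<Rightarrow> 'a \<Rightarrow> real ^ 'd"
    and \<mu> :: "real \<Rightarrow> real ^ 'd"
    and A :: "real \<Rightarrow> int \<Rightarrow> real ^ 'd ^ 'd"
    and At :: "int \<Rightarrow> nat \<Rightarrow> int \<Rightarrow> real ^ 'd ^ 'd"
    and \<theta> B :: real
    and S :: "(ereal ^ 'd) set" and \<rho> :: "ereal ^ 'd \<Rightarrow> ereal ^ 'd \<Rightarrow> real"
    and f :: "ereal ^ 'd \<Rightarrow> real ^ 'd \<Rightarrow> real"
    and C_Lip \<delta> K :: real
  assumes prob: "prob_space M"
    (* innovations: i.i.d., centred, integrable l1-norm *)
    and eps_rv: "\<And>t. eps t \<in> borel_measurable M"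
    and eps_indep: "prob_space.indep_vars M (\<lambda>_. borel) eps UNIV"
    and eps_ident: "\<And>t. distr M borel (eps t) = distr M borel (eps 1)"
    and eps_int: "integrable M (\<lambda>w. vnorm1 (eps 1 w))"
    and eps_centred: "integrable M (eps 1)" "(\<integral>w. eps 1 w \<partial>M) = 0"
    (* (LS) with k = 0 *)
    and mu_C1: "\<mu> C1_differentiable_on {0..1}"
    and theta: "0 < \<theta>" "\<theta> < 1"
    and At_bound: "\<And>t T j. 1 \<le> t \<Longrightarrow> t \<le> int T \<Longrightarrow> mnorm1 (At t T j) \<le> B * \<theta> ^ nat \<bar>j\<bar>"
    and A_C1: "\<And>j p q. (\<lambda>u. A u j $ p $ q) C1_differentiable_on {0..1}"
    and A_bound: "\<And>u j p q. u \<in> {0..1} \<Longrightarrow> \<bar>A u j $ p $ q\<bar> \<le> B * \<theta> ^ nat \<bar>j\<bar>"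
    and At_approx: "\<And>t T j. 1 \<le> t \<Longrightarrow> t \<le> int T \<Longrightarrow>
        real T * mnorm1 (At t T j - A (real_of_int t / real T) j) \<le> B * \<theta> ^ nat \<bar>j\<bar>"
    (* (F1) *)
    and S_compact: "compact_semimetric S \<rho>"
    and f_Lip: "\<And>s x y. s \<in> S \<Longrightarrow> \<bar>f s x - f s y\<bar> \<le> C_Lip * vnorm1 (x - y)"
    and delta: "0 < \<delta>" "\<delta> < 1/2"
    and mom_X: "\<And>s t T. s \<in> S \<Longrightarrow> 1 \<le> t \<Longrightarrow> t \<le> int T \<Longrightarrow>
        integrable M (\<lambda>w. \<bar>f s (XLS \<mu> At eps t T w)\<bar> powr (2 + \<delta>)) \<and>
        (\<integral>w. \<bar>f s (XLS \<mu> At eps t T w)\<bar> powr (2 + \<delta>) \<partial>M) \<le> K"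
    and mom_XM: "\<And>s t T m. s \<in> S \<Longrightarrow> 1 \<le> t \<Longrightarrow> t \<le> int T \<Longrightarrow>
        integrable M (\<lambda>w. \<bar>f s (XLSM \<mu> At eps m t T w)\<bar> powr (2 + \<delta>)) \<and>
        (\<integral>w. \<bar>f s (XLSM \<mu> At eps m t T w)\<bar> powr (2 + \<delta>) \<partial>M) \<le> K"
    and mom_Xtil: "\<And>s u. s \<in> S \<Longrightarrow> u \<in> {0..1} \<Longrightarrow>
        integrable M (\<lambda>w. \<bar>f s (Xtil \<mu> A eps 0 u w)\<bar> powr (2 + \<delta>)) \<and>
        (\<integral>w. \<bar>f s (Xtil \<mu> A eps 0 u w)\<bar> powr (2 + \<delta>) \<partial>M) \<le> K"
    and mom_XtilM: "\<And>s u m. s \<in> S \<Longrightarrow> u \<in> {0..1} \<Longrightarrow>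
        integrable M (\<lambda>w. \<bar>f s (XtilM \<mu> A eps m 0 u w)\<bar> powr (2 + \<delta>)) \<and>
        (\<integral>w. \<bar>f s (XtilM \<mu> A eps m 0 u w)\<bar> powr (2 + \<delta>) \<partial>M) \<le> K"
  shows "\<exists>C_Cov::real. \<forall>h::int. \<forall>s1\<in>S. \<forall>s2\<in>S. \<forall>u1\<in>{0..1}. \<forall>u2\<in>{0..1}.
           \<bar>cov M (\<lambda>w. f s1 (Xtil \<mu> A eps 0 u1 w)) (\<lambda>w. f s2 (Xtil \<mu> A eps h u2 w))\<bar>
             \<le> C_Cov * \<theta> powr (real_of_int \<bar>h\<bar> * \<delta> / (2 * (1 + \<delta>)))"
proof -
  interpret P: prob_space M by (rule prob)
  have erv[measurable]: "\<And>t. eps t \<in> borel_measurable M" by (rule eps_rv)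
  define d where "d = real CARD('d)"
  define E1 where "E1 = (\<integral>w. vnorm1 (eps 1 w) \<partial>M)"
  have E0: "0 \<le> E1" unfolding E1_def by (rule integral_nonneg_AE) simp
  have B0: "0 \<le> B"
  proof -
    have "\<bar>A 0 0 $ undefined $ undefined\<bar> \<le> B * \<theta> ^ nat \<bar>0::int\<bar>" by (rule A_bound) simp
    then show ?thesis by simp
  qed
  define Cp where "Cp = max C_Lip 0"
  have Cp0: "0 \<le> Cp" unfolding Cp_def by simp
  define c' where "c' = Cp * (d * B * E1 * 2 / (1 - \<theta>))"
  have c'0: "0 \<le> c'" using Cp0 B0 E0 theta unfolding c'_def d_def by simp
  have vE: "(\<integral>\<^sup>+w. ennreal (vnorm1 (eps k w)) \<partial>M) \<le> ennreal E1" for k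
  proof -
    have "(\<integral>\<^sup>+w. ennreal (vnorm1 (eps k w)) \<partial>M) = (\<integral>\<^sup>+x. ennreal (vnorm1 x) \<partial>distr M borel (eps k))"
      by (rule nn_integral_distr[symmetric]) simp_all
    also have "\<dots> = (\<integral>\<^sup>+x. ennreal (vnorm1 x) \<partial>distr M borel (eps 1))" by (simp only: eps_ident[of k])
    also have "\<dots> = (\<integral>\<^sup>+w. ennreal (vnorm1 (eps 1 w)) \<partial>M)" by (rule nn_integral_distr) simp_all
    also have "\<dots> = ennreal E1" unfolding E1_def
      by (rule nn_integral_eq_integral) (use eps_int in auto)
    finally show ?thesis by simp
  qed
  have fmeas: "f s \<in> borel_measurable borel" if "s \<in> S" for s
    by (rule borel_measurable_continuous_onI, rule lip_cont[of "f s" C_Lip]) (rule f_Lip[OF that])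
  have Xmeas: "(\<lambda>w. Xtil \<mu> A eps t u w) \<in> borel_measurable M" for t u
  proof -
    have "(\<lambda>w. infsum (\<lambda>j. A u j *v eps (t - j) w) UNIV) \<in> borel_measurable M"
      by (rule measurable_infsum_int) measurable
    then show ?thesis unfolding Xtil_def by measurable
  qed
  have XMmeas: "(\<lambda>w. XtilM \<mu> A eps m t u w) \<in> borel_measurable M" for m t u
    unfolding XtilM_def by measurable
  have tail: "(\<integral>\<^sup>+w. ennreal (vnorm1 (Xtil \<mu> A eps t u w - XtilM \<mu> A eps m t u w)) \<partial>M)
      \<le> ennreal (d * B * E1 * (2 * \<theta> ^ m / (1 - \<theta>)))" if u: "u \<in> {0..1}" for t u m
  proof -
    have eq: "Xtil \<mu> A eps t u w - XtilM \<mu> A eps m t u w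
        = infsum (\<lambda>j. A u j *v eps (t - j) w) UNIV - (\<Sum>j\<in>IS m. A u j *v eps (t - j) w)" for w
      by (simp add: Xtil_def XtilM_def IS_def)
    show ?thesis unfolding eq d_def
      by (rule tail_bound_int) (simp_all add: vE A_bound[OF u] theta B0 E0)
  qed
  have law: "distr M (Pi\<^sub>M UNIV (\<lambda>_. borel)) (\<lambda>w i. eps (i + h) w)
       = distr M (Pi\<^sub>M UNIV (\<lambda>_. borel)) (\<lambda>w i. eps i w)" for h
    by (rule shift_law[OF prob eps_rv eps_indep eps_ident])
  define C where "C = 2 * c' + 8 * \<bar>K\<bar> + 2 * c' * (1 + \<bar>K\<bar>)"
  show ?thesis
  proof (intro exI[of _ C] allI ballI)
    fix h :: int and s1 s2 :: "ereal^'d" and u1 u2 :: real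
    assume s1: "s1 \<in> S" and s2: "s2 \<in> S" and u1: "u1 \<in> {0..1}" and u2: "u2 \<in> {0..1}"
    define m where "m = nat ((\<bar>h\<bar> + 1) div 2)"
    define Y where "Y = (\<lambda>w. f s1 (Xtil \<mu> A eps 0 u1 w))"
    define Y' where "Y' = (\<lambda>w. f s1 (XtilM \<mu> A eps m 0 u1 w))"
    define Z where "Z = (\<lambda>w. f s2 (Xtil \<mu> A eps h u2 w))"
    define Z' where "Z' = (\<lambda>w. f s2 (XtilM \<mu> A eps m h u2 w))"
    have fm1[measurable]: "f s1 \<in> borel_measurable borel" by (rule fmeas[OF s1])
    have fm2[measurable]: "f s2 \<in> borel_measurable borel" by (rule fmeas[OF s2])
    have mY[measurable]: "Y \<in> borel_measurable M" unfolding Y_def by (rule measurable_compose[OF Xmeas fm1])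
    have mY'[measurable]: "Y' \<in> borel_measurable M" unfolding Y'_def by (rule measurable_compose[OF XMmeas fm1])
    have mZ[measurable]: "Z \<in> borel_measurable M" unfolding Z_def by (rule measurable_compose[OF Xmeas fm2])
    have mZ'[measurable]: "Z' \<in> borel_measurable M" unfolding Z'_def by (rule measurable_compose[OF XMmeas fm2])
    have iY: "integrable M (\<lambda>w. \<bar>Y w\<bar> powr (2 + \<delta>))" and kY: "(\<integral>w. \<bar>Y w\<bar> powr (2 + \<delta>) \<partial>M) \<le> K"
      using mom_Xtil[OF s1 u1] unfolding Y_def by auto
    have iY': "integrable M (\<lambda>w. \<bar>Y' w\<bar> powr (2 + \<delta>))" and kY': "(\<integral>w. \<bar>Y' w\<bar> powr (2 + \<delta>) \<partial>M) \<le> K"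
      using mom_XtilM[OF s1 u1, of m] unfolding Y'_def by auto
    define \<Phi> where "\<Phi> e = \<bar>f s2 (\<mu> u2 + infsum (\<lambda>j. A u2 j *v e (- j)) UNIV)\<bar> powr (2 + \<delta>)"
      for e :: "int \<Rightarrow> real^'d"
    have \<Phi>m: "\<Phi> \<in> borel_measurable (Pi\<^sub>M UNIV (\<lambda>_. borel))"
    proof -
      have [measurable]: "(\<lambda>e. infsum (\<lambda>j. A u2 j *v e (- j)) UNIV) \<in> borel_measurable (Pi\<^sub>M UNIV (\<lambda>_::int. borel :: (real^'d) measure))"
        by (rule measurable_infsum_int) measurable
      show ?thesis unfolding \<Phi>_def by measurable
    qed
    have \<Phi>h: "(\<lambda>w. \<Phi> (\<lambda>i. eps (i + h) w)) = (\<lambda>w. \<bar>Z w\<bar> powr (2 + \<delta>))"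
      unfolding \<Phi>_def Z_def Xtil_def by simp
    have \<Phi>0: "(\<lambda>w. \<Phi> (\<lambda>i. eps i w)) = (\<lambda>w. \<bar>f s2 (Xtil \<mu> A eps 0 u2 w)\<bar> powr (2 + \<delta>))"
      unfolding \<Phi>_def Xtil_def by simp
    have iZ: "integrable M (\<lambda>w. \<bar>Z w\<bar> powr (2 + \<delta>))"
      using shift_transfer(1)[OF law eps_rv \<Phi>m, of h] mom_Xtil[OF s2 u2] unfolding \<Phi>h \<Phi>0 by simp
    have kZ: "(\<integral>w. \<bar>Z w\<bar> powr (2 + \<delta>) \<partial>M) \<le> K"
      using shift_transfer(2)[OF law eps_rv \<Phi>m, of h] mom_Xtil[OF s2 u2] unfolding \<Phi>h \<Phi>0 by simp
    define \<Psi> where "\<Psi> e = \<bar>f s2 (\<mu> u2 + (\<Sum>j\<in>IS m. A u2 j *v e (- j)))\<bar> powr (2 + \<delta>)"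
      for e :: "int \<Rightarrow> real^'d"
    have \<Psi>m: "\<Psi> \<in> borel_measurable (Pi\<^sub>M UNIV (\<lambda>_. borel))"
      unfolding \<Psi>_def by measurable
    have \<Psi>h: "(\<lambda>w. \<Psi> (\<lambda>i. eps (i + h) w)) = (\<lambda>w. \<bar>Z' w\<bar> powr (2 + \<delta>))"
      unfolding \<Psi>_def Z'_def XtilM_def IS_def by simp
    have \<Psi>0: "(\<lambda>w. \<Psi> (\<lambda>i. eps i w)) = (\<lambda>w. \<bar>f s2 (XtilM \<mu> A eps m 0 u2 w)\<bar> powr (2 + \<delta>))"
      unfolding \<Psi>_def XtilM_def IS_def by simp
    have iZ': "integrable M (\<lambda>w. \<bar>Z' w\<bar> powr (2 + \<delta>))"
      using shift_transfer(1)[OF law eps_rv \<Psi>m, of h] mom_XtilM[OF s2 u2, of m] unfolding \<Psi>h \<Psi>0 by simp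
    have kZ': "(\<integral>w. \<bar>Z' w\<bar> powr (2 + \<delta>) \<partial>M) \<le> K"
      using shift_transfer(2)[OF law eps_rv \<Psi>m, of h] mom_XtilM[OF s2 u2, of m] unfolding \<Psi>h \<Psi>0 by simp
    have p1: "1 \<le> 2 + \<delta>" using delta by simp
    have Yi: "integrable M Y" by (rule P.int_of_pow[OF mY iY p1])
    have Y'i: "integrable M Y'" by (rule P.int_of_pow[OF mY' iY' p1])
    have Zi: "integrable M Z" by (rule P.int_of_pow[OF mZ iZ p1])
    have Z'i: "integrable M Z'" by (rule P.int_of_pow[OF mZ' iZ' p1])
    have r0: "0 \<le> d * B * E1 * (2 * \<theta> ^ m / (1 - \<theta>))"
      using B0 E0 theta unfolding d_def by simp
    have ceq: "Cp * (d * B * E1 * (2 * \<theta> ^ m / (1 - \<theta>))) = c' * \<theta> ^ m"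
      unfolding c'_def by (simp add: field_simps)
    have eY: "(\<integral>w. \<bar>Y w - Y' w\<bar> \<partial>M) \<le> c' * \<theta> ^ m"
    proof -
      have "(\<integral>w. \<bar>Y w - Y' w\<bar> \<partial>M) \<le> Cp * (d * B * E1 * (2 * \<theta> ^ m / (1 - \<theta>)))"
      proof (rule P.diff_bound[OF _ _ _ tail[OF u1, of 0 m] Cp0 r0])
        show "integrable M (\<lambda>w. \<bar>Y w - Y' w\<bar>)" using Yi Y'i by simp
        show "(\<lambda>w. vnorm1 (Xtil \<mu> A eps 0 u1 w - XtilM \<mu> A eps m 0 u1 w)) \<in> borel_measurable M"
          using Xmeas XMmeas by measurable
        fix w
        have "\<bar>Y w - Y' w\<bar> \<le> C_Lip * vnorm1 (Xtil \<mu> A eps 0 u1 w - XtilM \<mu> A eps m 0 u1 w)"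
          unfolding Y_def Y'_def by (rule f_Lip[OF s1])
        also have "\<dots> \<le> Cp * vnorm1 (Xtil \<mu> A eps 0 u1 w - XtilM \<mu> A eps m 0 u1 w)"
          unfolding Cp_def by (intro mult_right_mono) auto
        finally show "0 \<le> \<bar>Y w - Y' w\<bar> \<and> \<bar>Y w - Y' w\<bar> \<le> Cp * vnorm1 (Xtil \<mu> A eps 0 u1 w - XtilM \<mu> A eps m 0 u1 w)"
          by simp
      qed
      then show ?thesis using ceq by simp
    qed
    have eZ: "(\<integral>w. \<bar>Z w - Z' w\<bar> \<partial>M) \<le> c' * \<theta> ^ m"
    proof -
      have "(\<integral>w. \<bar>Z w - Z' w\<bar> \<partial>M) \<le> Cp * (d * B * E1 * (2 * \<theta> ^ m / (1 - \<theta>)))"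
      proof (rule P.diff_bound[OF _ _ _ tail[OF u2, of h m] Cp0 r0])
        show "integrable M (\<lambda>w. \<bar>Z w - Z' w\<bar>)" using Zi Z'i by simp
        show "(\<lambda>w. vnorm1 (Xtil \<mu> A eps h u2 w - XtilM \<mu> A eps m h u2 w)) \<in> borel_measurable M"
          using Xmeas XMmeas by measurable
        fix w
        have "\<bar>Z w - Z' w\<bar> \<le> C_Lip * vnorm1 (Xtil \<mu> A eps h u2 w - XtilM \<mu> A eps m h u2 w)"
          unfolding Z_def Z'_def by (rule f_Lip[OF s2])
        also have "\<dots> \<le> Cp * vnorm1 (Xtil \<mu> A eps h u2 w - XtilM \<mu> A eps m h u2 w)"
          unfolding Cp_def by (intro mult_right_mono) auto
        finally show "0 \<le> \<bar>Z w - Z' w\<bar> \<and> \<bar>Z w - Z' w\<bar> \<le> Cp * vnorm1 (Xtil \<mu> A eps h u2 w - XtilM \<mu> A eps m h u2 w)"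
          by simp
      qed
      then show ?thesis using ceq by simp
    qed
    have mint: "int m = (\<bar>h\<bar> + 1) div 2" unfolding m_def by simp
    have m2: "2 * int m \<le> \<bar>h\<bar> + 1" "\<bar>h\<bar> \<le> 2 * int m" unfolding mint by presburger+
    define J2 where "J2 = {i::int. \<bar>i - h\<bar> < int m}"
    have disj: "IS m \<inter> J2 = {}"
    proof (rule ccontr)
      assume "IS m \<inter> J2 \<noteq> {}"
      then obtain i where "\<bar>i\<bar> < int m" "\<bar>i - h\<bar> < int m" by (auto simp: IS_def J2_def)
      then show False using m2 by linarith
    qed
    define F1 where "F1 r = f s1 (\<mu> u1 + (\<Sum>j\<in>IS m. A u1 j *v r (0 - j)))" for r :: "int \<Rightarrow> real^'d"
    define F2 where "F2 r = f s2 (\<mu> u2 + (\<Sum>j\<in>IS m. A u2 j *v r (h - j)))" for r :: "int \<Rightarrow> real^'d"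
    have F1m: "F1 \<in> borel_measurable (Pi\<^sub>M (IS m) (\<lambda>_. borel))"
    proof -
      have [measurable]: "(\<lambda>r. \<Sum>j\<in>IS m. A u1 j *v r (0 - j)) \<in> borel_measurable (Pi\<^sub>M (IS m) (\<lambda>_::int. borel :: (real^'d) measure))"
      proof (rule borel_measurable_sum)
        fix j assume "j \<in> IS m"
        then have "0 - j \<in> IS m" by (simp add: IS_def)
        then show "(\<lambda>r. A u1 j *v r (0 - j)) \<in> borel_measurable (Pi\<^sub>M (IS m) (\<lambda>_::int. borel :: (real^'d) measure))"
          by (intro mvmult_measurable measurable_component_singleton)
      qed
      show ?thesis unfolding F1_def by measurable
    qed
    have F2m: "F2 \<in> borel_measurable (Pi\<^sub>M J2 (\<lambda>_. borel))"
    proof -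
      have [measurable]: "(\<lambda>r. \<Sum>j\<in>IS m. A u2 j *v r (h - j)) \<in> borel_measurable (Pi\<^sub>M J2 (\<lambda>_::int. borel :: (real^'d) measure))"
      proof (rule borel_measurable_sum)
        fix j assume "j \<in> IS m"
        then have "h - j \<in> J2" by (simp add: IS_def J2_def)
        then show "(\<lambda>r. A u2 j *v r (h - j)) \<in> borel_measurable (Pi\<^sub>M J2 (\<lambda>_::int. borel :: (real^'d) measure))"
          by (intro mvmult_measurable measurable_component_singleton)
      qed
      show ?thesis unfolding F2_def by measurable
    qed
    have Y'F: "Y' = (\<lambda>w. F1 (restrict (\<lambda>i. eps i w) (IS m)))"
    proof
      fix w
      have "(\<Sum>j\<in>IS m. A u1 j *v eps (0 - j) w) = (\<Sum>j\<in>IS m. A u1 j *v restrict (\<lambda>i. eps i w) (IS m) (0 - j))"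
        by (rule sum.cong) (auto simp: IS_def)
      then show "Y' w = F1 (restrict (\<lambda>i. eps i w) (IS m))"
        unfolding Y'_def F1_def XtilM_def IS_def by simp
    qed
    have Z'F: "Z' = (\<lambda>w. F2 (restrict (\<lambda>i. eps i w) J2))"
    proof
      fix w
      have "(\<Sum>j\<in>IS m. A u2 j *v eps (h - j) w) = (\<Sum>j\<in>IS m. A u2 j *v restrict (\<lambda>i. eps i w) J2 (h - j))"
        by (rule sum.cong) (auto simp: IS_def J2_def)
      then show "Z' w = F2 (restrict (\<lambda>i. eps i w) J2)"
        unfolding Z'_def F2_def XtilM_def IS_def by simp
    qed
    have ind: "(\<integral>w. Y' w * Z' w \<partial>M) = (\<integral>w. Y' w \<partial>M) * (\<integral>w. Z' w \<partial>M)"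
      unfolding Y'F Z'F
      by (rule indep_part[OF prob eps_rv eps_indep disj F1m F2m])
         (use Y'i Z'i Y'F Z'F in simp_all)
    have K0: "0 \<le> K"
    proof -
      have "0 \<le> (\<integral>w. \<bar>Y w\<bar> powr (2 + \<delta>) \<partial>M)" by (rule integral_nonneg_AE) simp
      then show ?thesis using kY by linarith
    qed
    define L where "L = \<theta> powr (- (real m / (1 + \<delta>)))"
    have L0: "0 < L" unfolding L_def using theta by simp
    have cc: "\<bar>cov M Y Z\<bar> \<le> 2 * (L * (c' * \<theta> ^ m) + 4 * K * L powr (-\<delta>)) + 2 * (c' * \<theta> ^ m) * (1 + K)"
      by (rule P.cov_core[OF mY mY' mZ mZ' iY iY' iZ iZ' kY kY' kZ kZ' eY eZ ind L0 delta(1)])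
    have xm: "real_of_int \<bar>h\<bar> \<le> 2 * real m"
    proof -
      have "real_of_int \<bar>h\<bar> \<le> real_of_int (2 * int m)" using m2(2) by linarith
      then show ?thesis by simp
    qed
    have "\<bar>cov M Y Z\<bar> \<le> C * \<theta> powr (real_of_int \<bar>h\<bar> * \<delta> / (2 * (1 + \<delta>)))"
      using cc final_arith[OF theta delta(1) c'0 K0 xm] unfolding C_def L_def by linarith
    then show "\<bar>cov M (\<lambda>w. f s1 (Xtil \<mu> A eps 0 u1 w)) (\<lambda>w. f s2 (Xtil \<mu> A eps h u2 w))\<bar>
             \<le> C * \<theta> powr (real_of_int \<bar>h\<bar> * \<delta> / (2 * (1 + \<delta>)))"
      unfolding Y_def Z_def .
  qed
qed


end
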